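(* For any plane graph $G$, $\pi'_{fl}(G)\le 10$.
   Context: A plane graph is a planar graph with a fixed embedding in the plane. A facial edge-path is a path whose edges are consecutive edges on the boundary walk of some face. An edge path $e_1,\dots,e_{2j}$ is a repetition if $c(e_i)=c(e_{i+j})$ for all $1\le i\le j$. An edge-coloring is facially non-repetitive if no facial edge-path is a repetition. $\pi'_{fl}(G)$, the facial Thue choice index, is the minimum $k$ such that for every assignment of lists of size at least $k$ to the edges, $G$ has a facially non-repetitive edge-coloring with each edge colored from its list. *)

theory Defs
  imports "HOL-Combinatorics.Permutations"
begin

text \<open>Plane graphs are represented combinatorially as planar maps (rotation systems):
  a finite set D of darts (half-edges), a fixed-point-free involution alpha on D
  (the two darts of an edge) and a permutation sigma on D (the cyclic order of darts
  around each vertex, given by the embedding).  Vertices are sigma-orbits, edges are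
  alpha-orbits, faces (boundary walks) are orbits of phi = sigma o alpha.  The map is
  plane iff every connected component satisfies Euler's formula V - E + F = 2.\<close>

definition orb :: "('d \<Rightarrow> 'd) \<Rightarrow> 'd \<Rightarrow> 'd set" where
  "orb f d = {(f ^^ n) d | n. True}"

definition orbits :: "('d \<Rightarrow> 'd) \<Rightarrow> 'd set \<Rightarrow> 'd set set" where
  "orbits f C = orb f ` C"

definition comp_rel :: "'d set \<Rightarrow> ('d \<Rightarrow> 'd) \<Rightarrow> ('d \<Rightarrow> 'd) \<Rightarrow> ('d \<times> 'd) set" where
  "comp_rel D alpha sigma = {(d, alpha d) | d. d \<in> D} \<union> {(d, sigma d) | d. d \<in> D}"

definition components :: "'d set \<Rightarrow> ('d \<Rightarrow> 'd) \<Rightarrow> ('d \<Rightarrow> 'd) \<Rightarrow> 'd set set" where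
  "components D alpha sigma = (\<lambda>d. {d'. (d, d') \<in> (comp_rel D alpha sigma)\<^sup>*}) ` D"

definition face_succ :: "('d \<Rightarrow> 'd) \<Rightarrow> ('d \<Rightarrow> 'd) \<Rightarrow> 'd \<Rightarrow> 'd" where
  "face_succ alpha sigma = sigma \<circ> alpha"

definition tail_v :: "('d \<Rightarrow> 'd) \<Rightarrow> 'd \<Rightarrow> 'd set" where
  "tail_v sigma d = orb sigma d"

definition head_v :: "('d \<Rightarrow> 'd) \<Rightarrow> ('d \<Rightarrow> 'd) \<Rightarrow> 'd \<Rightarrow> 'd set" where
  "head_v alpha sigma d = orb sigma (alpha d)"

definition edge_of :: "('d \<Rightarrow> 'd) \<Rightarrow> 'd \<Rightarrow> 'd set" where
  "edge_of alpha d = {d, alpha d}"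

definition plane_map :: "'d set \<Rightarrow> ('d \<Rightarrow> 'd) \<Rightarrow> ('d \<Rightarrow> 'd) \<Rightarrow> bool" where
  "plane_map D alpha sigma \<longleftrightarrow>
     finite D \<and> alpha permutes D \<and> sigma permutes D \<and>
     (\<forall>d\<in>D. alpha d \<noteq> d \<and> alpha (alpha d) = d) \<and>
     (\<forall>C\<in>components D alpha sigma.
        int (card (orbits sigma C)) - int (card (orbits alpha C))
          + int (card (orbits (face_succ alpha sigma) C)) = 2)"

definition simple_map :: "'d set \<Rightarrow> ('d \<Rightarrow> 'd) \<Rightarrow> ('d \<Rightarrow> 'd) \<Rightarrow> bool" where
  "simple_map D alpha sigma \<longleftrightarrow>
     (\<forall>d\<in>D. tail_v sigma d \<noteq> head_v alpha sigma d) \<and>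
     (\<forall>d\<in>D. \<forall>d'\<in>D. tail_v sigma d = tail_v sigma d' \<and> head_v alpha sigma d = head_v alpha sigma d'
          \<longrightarrow> d = d')"

definition plane_graph :: "'d set \<Rightarrow> ('d \<Rightarrow> 'd) \<Rightarrow> ('d \<Rightarrow> 'd) \<Rightarrow> bool" where
  "plane_graph D alpha sigma \<longleftrightarrow> plane_map D alpha sigma \<and> simple_map D alpha sigma"

definition facial_path :: "'d set \<Rightarrow> ('d \<Rightarrow> 'd) \<Rightarrow> ('d \<Rightarrow> 'd) \<Rightarrow> 'd list \<Rightarrow> bool" where
  "facial_path D alpha sigma ds \<longleftrightarrow>
     ds \<noteq> [] \<and> set ds \<subseteq> D \<and>
     (\<forall>i. Suc i < length ds \<longrightarrow> ds ! Suc i = face_succ alpha sigma (ds ! i)) \<and>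
     distinct (map (tail_v sigma) ds @ [head_v alpha sigma (last ds)])"

definition repetition :: "'c list \<Rightarrow> bool" where
  "repetition xs \<longleftrightarrow> (\<exists>j>0. length xs = 2 * j \<and> (\<forall>i<j. xs ! i = xs ! (i + j)))"

definition facially_nonrepetitive ::
  "'d set \<Rightarrow> ('d \<Rightarrow> 'd) \<Rightarrow> ('d \<Rightarrow> 'd) \<Rightarrow> ('d set \<Rightarrow> 'c) \<Rightarrow> bool" where
  "facially_nonrepetitive D alpha sigma c \<longleftrightarrow>
     (\<forall>ds. facial_path D alpha sigma ds \<longrightarrow> \<not> repetition (map (\<lambda>d. c (edge_of alpha d)) ds))"

end

theory Submission
  imports Defs Complex_Main
begin

lemma orb_step:
  assumes fin: "finite D" and sp: "sigma permutes D" and y: "y \<in> D"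
  shows "orb sigma (sigma y) = orb sigma y"
proof -
  have inD: "(sigma^^n) y \<in> D" for n
    by (induction n) (auto simp: y permutes_in_image[OF sp])
  have "\<not> inj_on (\<lambda>n. (sigma^^n) y) {0..card D}"
  proof
    assume "inj_on (\<lambda>n. (sigma^^n) y) {0..card D}"
    from card_inj_on_le[OF this _ fin] inD have "card {0..card D} \<le> card D" by auto
    then show False by simp
  qed
  then obtain m k where mk: "m < k" "(sigma^^m) y = (sigma^^k) y"
    unfolding inj_on_def by (metis nat_neq_iff)
  have inj: "inj sigma" using permutes_inj[OF sp] .
  have "(sigma^^k) y = (sigma^^m) ((sigma^^(k-m)) y)"
    using mk(1) by (metis funpow_add le_add_diff_inverse less_imp_le o_apply)
  with mk(2) inj_fn[OF inj, of m] have per: "(sigma^^(k-m)) y = y"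
    by (metis injD)
  define n where "n = k - m"
  have n0: "n > 0" using mk(1) n_def by simp
  show ?thesis
  proof
    show "orb sigma (sigma y) \<subseteq> orb sigma y"
      unfolding orb_def by (auto, metis funpow_Suc_right o_apply)
    show "orb sigma y \<subseteq> orb sigma (sigma y)"
    proof
      fix z assume "z \<in> orb sigma y"
      then obtain i where z: "z = (sigma^^i) y" unfolding orb_def by auto
      have "(sigma^^(i + n - 1)) (sigma y) = (sigma^^(i+n)) y"
        using n0 by (metis Suc_diff_1 add_gr_0 funpow_Suc_right o_apply)
      also have "\<dots> = (sigma^^i) ((sigma^^n) y)" by (simp add: funpow_add)
      also have "\<dots> = z" using per z n_def by simp
      finally show "z \<in> orb sigma (sigma y)" unfolding orb_def by auto
    qed
  qed
qed

locale fnr =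
  fixes D :: "'d set" and alpha sigma :: "'d \<Rightarrow> 'd" and L :: "'d set \<Rightarrow> 'c set"
  assumes finD: "finite D" and ap: "alpha permutes D" and sp: "sigma permutes D"
    and invo: "\<forall>d\<in>D. alpha d \<noteq> d \<and> alpha (alpha d) = d"
    and Lfin: "\<forall>d\<in>D. finite (L (edge_of alpha d)) \<and> card (L (edge_of alpha d)) = 10"
begin

abbreviation "phi \<equiv> face_succ alpha sigma"
abbreviation "ed \<equiv> edge_of alpha"
abbreviation "fp \<equiv> facial_path D alpha sigma"

lemma phip: "phi permutes D"
  unfolding face_succ_def by (rule permutes_compose[OF ap sp])

lemma injphi: "inj phi" using permutes_inj[OF phip] .

lemma alphaD: "x \<in> D \<Longrightarrow> alpha x \<in> D" using permutes_in_image[OF ap] by simp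
lemma phiD: "x \<in> D \<Longrightarrow> phi x \<in> D" using permutes_in_image[OF phip] by simp

lemma ed_eq: "x \<in> D \<Longrightarrow> y \<in> D \<Longrightarrow> ed x = ed y \<longleftrightarrow> (y = x \<or> y = alpha x)"
  unfolding edge_of_def using invo by auto

lemma fp_D: "fp P \<Longrightarrow> i < length P \<Longrightarrow> P!i \<in> D"
  unfolding facial_path_def by auto

lemma fp_succ: "fp P \<Longrightarrow> Suc i < length P \<Longrightarrow> P!Suc i = phi (P!i)"
  unfolding facial_path_def by auto

lemma fp_pow: "fp P \<Longrightarrow> i < length P \<Longrightarrow> P!i = (phi^^i) (P!0)"
  by (induction i) (auto simp: fp_succ)

lemma fp_unique:
  assumes "fp P1" "fp P2" "length P1 = length P2" "p < length P1" "P1!p = P2!p"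
  shows "P1 = P2"
proof -
  have "(phi^^p) (P1!0) = (phi^^p) (P2!0)"
    using assms fp_pow[of P1 p] fp_pow[of P2 p] by simp
  then have h: "P1!0 = P2!0" using inj_fn[OF injphi, of p] by (meson injD)
  show ?thesis
    by (rule nth_equalityI) (use assms h fp_pow in \<open>auto\<close>)
qed

lemma fp_distinct: assumes "fp P" shows "distinct (map ed P)"
proof -
  define n where "n = length P"
  define vs where "vs = map (tail_v sigma) P @ [head_v alpha sigma (last P)]"
  have dvs: "distinct vs" using assms unfolding facial_path_def vs_def by simp
  have lvs: "length vs = Suc n" unfolding vs_def n_def by simp
  have ne: "P \<noteq> []" using assms unfolding facial_path_def by simp
  have vt: "m < n \<Longrightarrow> vs!m = tail_v sigma (P!m)" for m
    unfolding vs_def n_def by (simp add: nth_append)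
  have vh: "m < n \<Longrightarrow> head_v alpha sigma (P!m) = vs!(Suc m)" for m
  proof -
    assume m: "m < n"
    show ?thesis
    proof (cases "Suc m < n")
      case True
      have "vs!(Suc m) = tail_v sigma (P!Suc m)" using vt True by simp
      also have "\<dots> = orb sigma (sigma (alpha (P!m)))"
        using fp_succ[OF assms] True n_def unfolding tail_v_def face_succ_def by simp
      also have "\<dots> = head_v alpha sigma (P!m)"
        unfolding head_v_def using orb_step[OF finD sp alphaD[OF fp_D[OF assms]]] m n_def by simp
      finally show ?thesis by simp
    next
      case False
      then have "m = n - 1" "Suc m = n" using m by auto
      then show ?thesis unfolding vs_def n_def using ne by (simp add: nth_append last_conv_nth)
    qed
  qed
  have inj: "i < Suc n \<Longrightarrow> k < Suc n \<Longrightarrow> vs!i = vs!k \<Longrightarrow> i = k" for i k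
    using dvs lvs by (simp add: nth_eq_iff_index_eq)
  show ?thesis
  proof (subst distinct_conv_nth, intro allI impI)
    fix i k assume ik: "i < length (map ed P)" "k < length (map ed P)" "i \<noteq> k"
    show "map ed P ! i \<noteq> map ed P ! k"
    proof
      assume eq: "map ed P ! i = map ed P ! k"
      have iD: "P!i \<in> D" and kD: "P!k \<in> D" using ik fp_D[OF assms] by auto
      have "ed (P!i) = ed (P!k)" using eq ik by simp
      then have "P!k = P!i \<or> P!k = alpha (P!i)" using ed_eq[OF iD kD] by simp
      then show False
      proof
        assume "P!k = P!i"
        then have "vs!k = vs!i" using vt ik n_def by simp
        then show False using inj ik n_def by simp
      next
        assume a: "P!k = alpha (P!i)"
        have "vs!k = tail_v sigma (P!k)" using vt ik n_def by simp
        also have "\<dots> = head_v alpha sigma (P!i)" unfolding tail_v_def head_v_def a by simp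
        also have "\<dots> = vs!(Suc i)" using vh ik n_def by simp
        finally have k1: "k = Suc i" using inj ik n_def by simp
        have "vs!(Suc k) = head_v alpha sigma (P!k)" using vh ik n_def by simp
        also have "\<dots> = tail_v sigma (P!i)" unfolding tail_v_def head_v_def a using invo iD by simp
        also have "\<dots> = vs!i" using vt ik n_def by simp
        finally have "Suc k = i" using inj ik n_def by simp
        then show False using k1 by simp
      qed
    qed
  qed
qed

lemma fp_len: assumes "fp P" shows "length P \<le> card D"
proof -
  have "distinct P" using fp_distinct[OF assms] by (simp add: distinct_map)
  then have "length P = card (set P)" by (simp add: distinct_card)
  also have "\<dots> \<le> card D" using assms finD unfolding facial_path_def by (simp add: card_mono)
  finally show ?thesis .
qed


definition "E = ed ` D"
definition "good T g \<longleftrightarrow> (\<forall>Q. fp Q \<and> set (map ed Q) \<subseteq> T \<longrightarrow> \<not> repetition (map (\<lambda>d. g (ed d)) Q))"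
definition "GS T = {f \<in> PiE T L. good T f}"
definition "G T = card (GS T)"
definition "absent T x \<longleftrightarrow> (ed (phi x) \<notin> T \<or> (\<exists>y\<in>D. phi y = x \<and> ed y \<notin> T))"
definition "Bad S e = {P. fp P \<and> set (map ed P) \<subseteq> S \<and> e \<in> set (map ed P) \<and> even (length P)}"
definition "H e P = (let j = length P div 2 in
   if e \<in> ed ` set (take j P) then ed ` set (take j P) else ed ` set (drop j P))"

lemma finE: "finite E" unfolding E_def using finD by simp

lemma LE: "e \<in> E \<Longrightarrow> finite (L e) \<and> card (L e) = 10"
  unfolding E_def using Lfin by auto

lemma finGS: "T \<subseteq> E \<Longrightarrow> finite (GS T)"
  unfolding GS_def using finE LE
  by (intro finite_subset[OF _ finite_PiE[of T L]]) (auto intro: finite_subset)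

lemma good_cong: "(\<forall>z\<in>T. g1 z = g2 z) \<Longrightarrow> good T g1 = good T g2"
proof -
  assume a: "\<forall>z\<in>T. g1 z = g2 z"
  have "set (map ed Q) \<subseteq> T \<Longrightarrow> map (\<lambda>d. g1 (ed d)) Q = map (\<lambda>d. g2 (ed d)) Q" for Q
    using a by (auto intro: map_cong)
  then show ?thesis unfolding good_def by metis
qed

lemma good_mono: "T' \<subseteq> T \<Longrightarrow> good T g \<Longrightarrow> good T' g"
  unfolding good_def by blast

lemma distinct_ed: assumes "fp P" "i < length P" "k < length P" "ed (P!i) = ed (P!k)"
  shows "i = k"
  using fp_distinct[OF assms(1)] assms(2-4) by (metis distinct_conv_nth length_map nth_map)

lemma chain:
  assumes Bh: "\<And>T x. T \<subseteq> S - {ed (P!p)} \<Longrightarrow> x \<in> D \<Longrightarrow> ed x \<in> T \<Longrightarrow> absent T x \<Longrightarrow> 3 * G (T - {ed x}) \<le> G T"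
  and P: "fp P" "set (map ed P) \<subseteq> S" "b < length P"
  shows "a \<le> p \<Longrightarrow> p \<le> b \<Longrightarrow> 3^(b-a) * G (S - ed ` (nth P ` {a..b})) \<le> G (S - {ed (P!p)})"
  using P(3)
proof (induction "b - a" arbitrary: a b)
  case 0
  then have "a = p" "b = p" by auto
  then show ?case by simp
next
  case (Suc k)
  have inS: "i < length P \<Longrightarrow> ed (P!i) \<in> S" for i using P(2) by auto
  show ?case
  proof (cases "a < p")
    case True
    have IH: "3^k * G (S - ed ` (nth P ` {Suc a..b})) \<le> G (S - {ed (P!p)})"
    proof -
      have "k = b - Suc a" using Suc.hyps(2) by simp
      then show ?thesis using Suc.hyps(1)[of b "Suc a"] Suc.prems True by simp
    qed
    define T where "T = S - ed ` (nth P ` {Suc a..b})"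
    have TU: "T \<subseteq> S - {ed (P!p)}" unfolding T_def using True Suc.prems by auto
    have xD: "P!a \<in> D" using fp_D[OF P(1)] Suc.prems by simp
    have "ed (P!a) \<notin> ed ` (nth P ` {Suc a..b})"
    proof
      assume "ed (P!a) \<in> ed ` (nth P ` {Suc a..b})"
      then obtain i where "i \<in> {Suc a..b}" "ed (P!a) = ed (P!i)" by auto
      then show False using distinct_ed[OF P(1), of a i] Suc.prems by auto
    qed
    then have xT: "ed (P!a) \<in> T" unfolding T_def using inS[of a] Suc.prems by auto
    have ab: "T - {ed (P!a)} = S - ed ` (nth P ` {a..b})"
    proof -
      have "{a..b} = insert a {Suc a..b}" using Suc.prems by auto
      then show ?thesis unfolding T_def by auto
    qed
    have "Suc a \<in> {Suc a..b}" using Suc.prems True by auto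
    then have "ed (P!Suc a) \<in> ed ` (nth P ` {Suc a..b})" by blast
    then have "ed (phi (P!a)) \<notin> T"
      unfolding T_def using fp_succ[OF P(1), of a] Suc.prems True by auto
    then have abs: "absent T (P!a)" unfolding absent_def by simp
    have "3 * G (T - {ed (P!a)}) \<le> G T" using Bh[OF TU xD xT abs] .
    then have "3^(Suc k) * G (S - ed ` (nth P ` {a..b})) \<le> 3^k * G T" using ab by simp
    also have "\<dots> \<le> G (S - {ed (P!p)})" using IH T_def by simp
    finally show ?thesis using Suc.hyps(2) by simp
  next
    case False
    then have ap': "a = p" "p < b" using Suc.prems Suc.hyps(2) by auto
    have IH: "3^k * G (S - ed ` (nth P ` {a..b-1})) \<le> G (S - {ed (P!p)})"
    proof -
      have "k = b - 1 - a" using Suc.hyps(2) by simp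
      then show ?thesis using Suc.hyps(1)[of "b-1" a] Suc.prems ap' by simp
    qed
    define T where "T = S - ed ` (nth P ` {a..b-1})"
    have TU: "T \<subseteq> S - {ed (P!p)}" unfolding T_def using ap' by auto
    have xD: "P!b \<in> D" using fp_D[OF P(1)] Suc.prems by simp
    have "ed (P!b) \<notin> ed ` (nth P ` {a..b-1})"
    proof
      assume "ed (P!b) \<in> ed ` (nth P ` {a..b-1})"
      then obtain i where "i \<in> {a..b-1}" "ed (P!b) = ed (P!i)" by auto
      moreover have "i < length P" using \<open>i \<in> {a..b-1}\<close> Suc.prems by auto
      ultimately show False using distinct_ed[OF P(1), of b i] Suc.prems ap' by auto
    qed
    then have xT: "ed (P!b) \<in> T" unfolding T_def using inS[of b] Suc.prems by auto
    have ab: "T - {ed (P!b)} = S - ed ` (nth P ` {a..b})"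
    proof -
      have "{a..b} = insert b {a..b-1}" using ap' by auto
      then show ?thesis unfolding T_def by auto
    qed
    have yD: "P!(b-1) \<in> D" using fp_D[OF P(1)] Suc.prems by simp
    have "phi (P!(b-1)) = P!b" using fp_succ[OF P(1), of "b-1"] Suc.prems ap' by simp
    moreover have "ed (P!(b-1)) \<notin> T" unfolding T_def using ap' by auto
    ultimately have abs: "absent T (P!b)" unfolding absent_def using yD by blast
    have "3 * G (T - {ed (P!b)}) \<le> G T" using Bh[OF TU xD xT abs] .
    then have "3^(Suc k) * G (S - ed ` (nth P ` {a..b})) \<le> 3^k * G T" using ab by simp
    also have "\<dots> \<le> G (S - {ed (P!p)})" using IH T_def by simp
    finally show ?thesis using Suc.hyps(2) by simp
  qed
qed


lemma rep_nth: assumes "repetition (map (\<lambda>d. f (ed d)) P)" "i < length P div 2"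
  shows "f (ed (P!i)) = f (ed (P!(i + length P div 2)))"
proof -
  obtain j where j: "j > 0" "length P = 2*j" "\<forall>i<j. map (\<lambda>d. f (ed d)) P ! i = map (\<lambda>d. f (ed d)) P ! (i+j)"
    using assms(1) unfolding repetition_def by auto
  have "length P div 2 = j" using j by simp
  then show ?thesis using j assms(2) by auto
qed

lemma rep_even: "repetition xs \<Longrightarrow> even (length xs)"
  unfolding repetition_def by auto

lemma finBad: "finite (Bad S e)"
proof -
  have "Bad S e \<subseteq> {xs. set xs \<subseteq> D \<and> length xs \<le> card D}"
  proof
    fix P assume "P \<in> Bad S e"
    then have "fp P" unfolding Bad_def by simp
    then show "P \<in> {xs. set xs \<subseteq> D \<and> length xs \<le> card D}"
      using fp_len[of P] unfolding facial_path_def by simp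
  qed
  then show ?thesis using finite_lists_length_le[OF finD] finite_subset by blast
qed

lemma half_partner:
  assumes PB: "P \<in> Bad S e" and z: "z \<in> H e P"
  shows "\<exists>w. w \<in> S - H e P \<and> (\<forall>f :: 'd set \<Rightarrow> 'c. repetition (map (\<lambda>d. f (ed d)) P) \<longrightarrow> f z = f w)"
proof -
  define j where "j = length P div 2"
  have fpP: "fp P" and PS: "set (map ed P) \<subseteq> S" and ev: "even (length P)"
    using PB unfolding Bad_def by auto
  have lj: "length P = 2*j" using ev j_def by auto
  have inS: "i < length P \<Longrightarrow> ed (P!i) \<in> S" for i using PS by auto
  show ?thesis
  proof (cases "e \<in> ed ` set (take j P)")
    case True
    then have Hd: "H e P = ed ` set (take j P)" unfolding H_def j_def Let_def by simp
    from z Hd obtain q where q: "q < j" "z = ed (P!q)"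
      by (auto simp: in_set_conv_nth lj)
    define w where "w = ed (P!(q+j))"
    have "w \<notin> H e P"
    proof
      assume "w \<in> H e P"
      then obtain q' where "q' < j" "w = ed (P!q')" using Hd by (auto simp: in_set_conv_nth lj)
      then show False using distinct_ed[OF fpP, of "q+j" q'] w_def q lj by auto
    qed
    moreover have "w \<in> S" using inS q lj w_def by simp
    moreover have "\<forall>f :: 'd set \<Rightarrow> 'c. repetition (map (\<lambda>d. f (ed d)) P) \<longrightarrow> f z = f w"
      using rep_nth q w_def j_def by auto
    ultimately show ?thesis by blast
  next
    case False
    then have Hd: "H e P = ed ` set (drop j P)" unfolding H_def j_def Let_def by simp
    from z Hd obtain q where q: "q < j" "z = ed (P!(j+q))"
      by (auto simp: in_set_conv_nth lj)
    define w where "w = ed (P!q)"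
    have "w \<notin> H e P"
    proof
      assume "w \<in> H e P"
      then obtain q' where "q' < j" "w = ed (P!(j+q'))" using Hd by (auto simp: in_set_conv_nth lj)
      then show False using distinct_ed[OF fpP, of q "j+q'"] w_def q lj by auto
    qed
    moreover have "w \<in> S" using inS q lj w_def by simp
    moreover have "\<forall>f :: 'd set \<Rightarrow> 'c. repetition (map (\<lambda>d. f (ed d)) P) \<longrightarrow> f z = f w"
    proof (intro allI impI)
      fix f assume r: "repetition (map (\<lambda>d. f (ed d)) P)"
      have "f (ed (P!q)) = f (ed (P!(q + j)))" using rep_nth[OF r, of q] q j_def by simp
      then show "f z = f w" using q w_def by (simp add: add.commute)
    qed
    ultimately show ?thesis by blast
  qed
qed

lemma eH: assumes "P \<in> Bad S e" shows "e \<in> H e P" "H e P \<subseteq> S"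
proof -
  define j where "j = length P div 2"
  have "set P = set (take j P) \<union> set (drop j P)"
    by (metis append_take_drop_id set_append)
  moreover have "e \<in> ed ` set P" "ed ` set P \<subseteq> S" using assms unfolding Bad_def by auto
  ultimately show "e \<in> H e P" "H e P \<subseteq> S" unfolding H_def j_def[symmetric] Let_def
    by (auto dest: in_set_takeD in_set_dropD)
qed

lemma count:
  assumes SE: "S \<subseteq> E" and xD: "x \<in> D" and xS: "ed x \<in> S"
  shows "10 * G (S - {ed x}) \<le> G S + (\<Sum>P\<in>Bad S (ed x). G (S - H (ed x) P))"
proof -
  define e where "e = ed x"
  have eE: "e \<in> E" unfolding e_def E_def using xD by simp
  have eS: "e \<in> S" using xS e_def by simp
  have SeE: "S - {e} \<subseteq> E" using SE by blast
  define A where "A = (\<lambda>(g,c). g(e := c)) ` (GS (S - {e}) \<times> L e)"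
  have finprod: "finite (GS (S - {e}) \<times> L e)"
    using finite_cartesian_product[OF finGS[OF SeE]] LE[OF eE] by blast
  have injA: "inj_on (\<lambda>(g,c). g(e := c)) (GS (S - {e}) \<times> L e)"
  proof (rule inj_onI)
    fix u v assume u: "u \<in> GS (S - {e}) \<times> L e" and v: "v \<in> GS (S - {e}) \<times> L e"
      and eq0: "(\<lambda>(g,c). g(e := c)) u = (\<lambda>(g,c). g(e := c)) v"
    obtain g1 c1 where uu: "u = (g1, c1)" by (cases u)
    obtain g2 c2 where vv: "v = (g2, c2)" by (cases v)
    have eq: "g1(e := c1) = g2(e := c2)" using eq0 uu vv by simp
    have g1: "g1 \<in> PiE (S - {e}) L" using u uu unfolding GS_def by simp
    have g2: "g2 \<in> PiE (S - {e}) L" using v vv unfolding GS_def by simp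
    have "c1 = c2" using fun_cong[OF eq, of e] by simp
    moreover have "g1 = g2"
    proof
      fix z show "g1 z = g2 z"
      proof (cases "z = e")
        case True
        then show ?thesis using PiE_arb[OF g1, of z] PiE_arb[OF g2, of z] by simp
      next
        case False
        then show ?thesis using fun_cong[OF eq, of z] by simp
      qed
    qed
    ultimately show "u = v" using uu vv by simp
  qed
  have cardA: "card A = 10 * G (S - {e})"
  proof -
    have "card A = card (GS (S - {e}) \<times> L e)" unfolding A_def by (rule card_image[OF injA])
    also have "\<dots> = card (GS (S - {e})) * card (L e)" by (rule card_cartesian_product)
    also have "\<dots> = 10 * G (S - {e})" using LE[OF eE] unfolding G_def by simp
    finally show ?thesis .
  qed
  have Aprop: "f \<in> PiE S L \<and> (\<exists>g\<in>GS (S - {e}). \<forall>z. z \<noteq> e \<longrightarrow> f z = g z)" if fA: "f \<in> A" for f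
  proof -
    obtain u where u: "u \<in> GS (S - {e}) \<times> L e" "f = (\<lambda>(g,c). g(e := c)) u"
      using fA unfolding A_def by (rule imageE)
    obtain g c where uu: "u = (g, c)" by (cases u)
    have gc: "g \<in> GS (S - {e})" "c \<in> L e" "f = g(e := c)" using u uu by auto
    have gP: "g \<in> PiE (S - {e}) L" using gc(1) unfolding GS_def by simp
    have "insert e (S - {e}) = S" using eS by blast
    then have "f \<in> PiE S L" using PiE_fun_upd[OF gc(2) gP] gc(3) by simp
    moreover have "\<forall>z. z \<noteq> e \<longrightarrow> f z = g z" using gc(3) by simp
    ultimately show ?thesis using gc(1) by blast
  qed
  define BE where "BE P = {f \<in> A. repetition (map (\<lambda>d. f (ed d)) P)}" for P
  have cover: "A \<subseteq> GS S \<union> (\<Union>P\<in>Bad S e. BE P)"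
  proof
    fix f assume fA: "f \<in> A"
    obtain g where g: "g \<in> GS (S - {e})" "\<forall>z. z \<noteq> e \<longrightarrow> f z = g z"
      using Aprop[OF fA] by blast
    have fP: "f \<in> PiE S L" using Aprop[OF fA] by blast
    have gg: "good (S - {e}) g" using g(1) unfolding GS_def by simp
    show "f \<in> GS S \<union> (\<Union>P\<in>Bad S e. BE P)"
    proof (cases "good S f")
      case True then show ?thesis using fP unfolding GS_def by simp
    next
      case False
      then obtain Q where Q: "fp Q" "set (map ed Q) \<subseteq> S" "repetition (map (\<lambda>d. f (ed d)) Q)"
        unfolding good_def by blast
      have "e \<in> set (map ed Q)"
      proof (rule ccontr)
        assume ne: "e \<notin> set (map ed Q)"
        then have sub: "set (map ed Q) \<subseteq> S - {e}" using Q(2) by blast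
        have meq: "map (\<lambda>d. f (ed d)) Q = map (\<lambda>d. g (ed d)) Q"
        proof (rule map_cong[OF refl])
          fix d assume "d \<in> set Q"
          then have "ed d \<noteq> e" using ne by (metis image_eqI set_map)
          then show "f (ed d) = g (ed d)" using g(2) by simp
        qed
        have "\<not> repetition (map (\<lambda>d. g (ed d)) Q)" using gg Q(1) sub unfolding good_def by blast
        then show False using Q(3) meq by simp
      qed
      then have QB: "Q \<in> Bad S e" using Q rep_even[OF Q(3)] unfolding Bad_def by simp
      have "f \<in> BE Q" unfolding BE_def using fA Q(3) by simp
      then show ?thesis using QB by blast
    qed
  qed
  have BEle: "card (BE P) \<le> G (S - H e P)" if PB: "P \<in> Bad S e" for P
  proof -
    have HS: "H e P \<subseteq> S" and eH': "e \<in> H e P" using eH[OF PB] by auto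
    have into: "(\<lambda>f. restrict f (S - H e P)) ` BE P \<subseteq> GS (S - H e P)"
    proof
      fix h assume "h \<in> (\<lambda>f. restrict f (S - H e P)) ` BE P"
      then obtain f where fB: "f \<in> BE P" and h: "h = restrict f (S - H e P)" by blast
      have fA: "f \<in> A" using fB unfolding BE_def by simp
      obtain g where g: "g \<in> GS (S - {e})" "\<forall>z. z \<noteq> e \<longrightarrow> f z = g z"
        using Aprop[OF fA] by blast
      have fP: "f \<in> PiE S L" using Aprop[OF fA] by blast
      have "\<forall>i\<in>S - H e P. f i \<in> L i" using PiE_mem[OF fP] by blast
      then have "h \<in> PiE (S - H e P) L" unfolding h by (simp add: restrict_PiE_iff)
      moreover have "good (S - H e P) h"
      proof -
        have gg: "good (S - {e}) g" using g(1) unfolding GS_def by simp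
        have "S - H e P \<subseteq> S - {e}" using eH' by blast
        then have "good (S - H e P) g" using good_mono gg by blast
        moreover have "\<forall>z\<in>S - H e P. h z = g z"
        proof
          fix z assume z: "z \<in> S - H e P"
          then have "z \<noteq> e" using eH' by blast
          then show "h z = g z" using z h g(2) by simp
        qed
        ultimately show ?thesis using good_cong[of "S - H e P" h g] by simp
      qed
      ultimately show "h \<in> GS (S - H e P)" unfolding GS_def by simp
    qed
    have inj: "inj_on (\<lambda>f. restrict f (S - H e P)) (BE P)"
    proof (rule inj_onI)
      fix f1 f2 assume f1: "f1 \<in> BE P" and f2: "f2 \<in> BE P"
        and eq: "restrict f1 (S - H e P) = restrict f2 (S - H e P)"
      have a1: "f1 \<in> A" and a2: "f2 \<in> A" using f1 f2 unfolding BE_def by simp_all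
      have p1: "f1 \<in> PiE S L" using Aprop[OF a1] by blast
      have p2: "f2 \<in> PiE S L" using Aprop[OF a2] by blast
      have r1: "repetition (map (\<lambda>d. f1 (ed d)) P)" and r2: "repetition (map (\<lambda>d. f2 (ed d)) P)"
        using f1 f2 unfolding BE_def by simp_all
      have out: "z \<in> S - H e P \<Longrightarrow> f1 z = f2 z" for z using fun_cong[OF eq, of z] by simp
      show "f1 = f2"
      proof
        fix z show "f1 z = f2 z"
        proof (cases "z \<in> S")
          case False then show ?thesis using PiE_arb[OF p1 False] PiE_arb[OF p2 False] by simp
        next
          case True
          show ?thesis
          proof (cases "z \<in> H e P")
            case False then show ?thesis using out True by simp
          next
            case True
            then obtain w where w: "w \<in> S - H e P" "\<forall>f :: 'd set \<Rightarrow> 'c. repetition (map (\<lambda>d. f (ed d)) P) \<longrightarrow> f z = f w"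
              using half_partner[OF PB] by blast
            have "f1 z = f1 w" using mp[OF spec[OF w(2), of f1] r1] .
            moreover have "f2 z = f2 w" using mp[OF spec[OF w(2), of f2] r2] .
            ultimately show ?thesis using out[OF w(1)] by simp
          qed
        qed
      qed
    qed
    have "S - H e P \<subseteq> E" using SE by blast
    then have "finite (GS (S - H e P))" by (rule finGS)
    then show ?thesis unfolding G_def using card_inj_on_le[OF inj into] by simp
  qed
  have finA: "finite A" unfolding A_def using finprod by simp
  have finBE: "finite (BE P)" for P using finA unfolding BE_def by simp
  have finU: "finite (GS S \<union> (\<Union>P\<in>Bad S e. BE P))" using finGS[OF SE] finBad finBE by simp
  have "card A \<le> card (GS S \<union> (\<Union>P\<in>Bad S e. BE P))"
    using card_mono[OF finU cover] .
  also have "\<dots> \<le> card (GS S) + card (\<Union>P\<in>Bad S e. BE P)" by (rule card_Un_le)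
  also have "\<dots> \<le> G S + (\<Sum>P\<in>Bad S e. card (BE P))"
    using card_UN_le[OF finBad, of BE] unfolding G_def by simp
  also have "\<dots> \<le> G S + (\<Sum>P\<in>Bad S e. G (S - H e P))"
    using BEle by (simp add: sum_mono)
  finally show ?thesis using cardA e_def by simp
qed

lemma paths_le: assumes "finite I"
  shows "card {P. fp P \<and> length P = n \<and> (\<exists>p\<in>I. p < n \<and> P!p = y)} \<le> card I"
proof -
  define F where "F p = (THE P. fp P \<and> length P = n \<and> P!p = y)" for p
  have "{P. fp P \<and> length P = n \<and> (\<exists>p\<in>I. p < n \<and> P!p = y)} \<subseteq> F ` I"
  proof
    fix P assume "P \<in> {P. fp P \<and> length P = n \<and> (\<exists>p\<in>I. p < n \<and> P!p = y)}"
    then obtain p where P: "fp P" "length P = n" "p \<in> I" "p < n" "P!p = y" by auto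
    have "F p = P" unfolding F_def
    proof (rule the_equality)
      show "fp P \<and> length P = n \<and> P!p = y" using P by simp
      fix Q assume "fp Q \<and> length Q = n \<and> Q!p = y"
      then show "Q = P" using fp_unique[of Q P p] P by auto
    qed
    then show "P \<in> F ` I" using P by auto
  qed
  then have "card {P. fp P \<and> length P = n \<and> (\<exists>p\<in>I. p < n \<and> P!p = y)} \<le> card (F ` I)"
    using assms by (intro card_mono) auto
  also have "\<dots> \<le> card I" by (rule card_image_le[OF assms])
  finally show ?thesis .
qed

lemma card_Bad_len:
  assumes xD: "x \<in> D"
  shows "card {P \<in> Bad S (ed x). length P = n} \<le> 2 * n"
    and "absent S x \<Longrightarrow> card {P \<in> Bad S (ed x). length P = n} \<le> n + 1"
proof -
  define X where "X I y = {P. fp P \<and> length P = n \<and> (\<exists>p\<in>I. p < n \<and> P!p = y)}" for I y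
  have finX: "finite I \<Longrightarrow> finite (X I y)" for I y
  proof -
    have "X I y \<subseteq> {xs. set xs \<subseteq> D \<and> length xs \<le> card D}"
      unfolding X_def using fp_len unfolding facial_path_def by auto
    then show ?thesis using finite_lists_length_le[OF finD] finite_subset by blast
  qed
  have cX: "finite I \<Longrightarrow> card (X I y) \<le> card I" for I y unfolding X_def by (rule paths_le)
  have axD: "alpha x \<in> D" using alphaD[OF xD] .
  have mem: "\<exists>p<n. P!p = x \<or> P!p = alpha x" if a: "P \<in> Bad S (ed x)" "length P = n" for P
  proof -
    from a obtain z where z: "z \<in> set P" "ed z = ed x" unfolding Bad_def by auto
    have "z \<in> D" using z a unfolding Bad_def facial_path_def by auto
    then have "z = x \<or> z = alpha x" using ed_eq[OF xD] z by metis
    moreover obtain p where "p < n" "P!p = z" using z a(2) by (auto simp: in_set_conv_nth)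
    ultimately show ?thesis by auto
  qed
  have "{P \<in> Bad S (ed x). length P = n} \<subseteq> X {..<n} x \<union> X {..<n} (alpha x)"
    using mem unfolding X_def Bad_def by fastforce
  then have "card {P \<in> Bad S (ed x). length P = n} \<le> card (X {..<n} x \<union> X {..<n} (alpha x))"
    using finX by (intro card_mono) auto
  also have "\<dots> \<le> card (X {..<n} x) + card (X {..<n} (alpha x))" by (rule card_Un_le)
  also have "\<dots> \<le> 2 * n" using cX[of "{..<n}" x] cX[of "{..<n}" "alpha x"] by simp
  finally show "card {P \<in> Bad S (ed x). length P = n} \<le> 2 * n" .
  assume ab: "absent S x"
  obtain k where k: "{P \<in> Bad S (ed x). length P = n} \<subseteq> X {k} x \<union> X {..<n} (alpha x)"
  proof (cases "ed (phi x) \<notin> S")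
    case True
    have "{P \<in> Bad S (ed x). length P = n} \<subseteq> X {n - 1} x \<union> X {..<n} (alpha x)"
    proof
      fix P assume PB: "P \<in> {P \<in> Bad S (ed x). length P = n}"
      then have fpP: "fp P" and PS: "set (map ed P) \<subseteq> S" and ln: "length P = n" unfolding Bad_def by auto
      obtain p where p: "p < n" "P!p = x \<or> P!p = alpha x" using mem PB by auto
      show "P \<in> X {n - 1} x \<union> X {..<n} (alpha x)"
      proof (cases "P!p = x")
        case True
        have "p = n - 1"
        proof (rule ccontr)
          assume "p \<noteq> n - 1"
          then have "Suc p < length P" using p ln by auto
          then have "P!Suc p = phi x" "ed (P!Suc p) \<in> S" using fp_succ[OF fpP] True PS nth_mem[of "Suc p" P] by auto
          then show False using \<open>ed (phi x) \<notin> S\<close> by simp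
        qed
        then show ?thesis using True p fpP ln unfolding X_def by auto
      next
        case False
        then show ?thesis using p fpP ln unfolding X_def by auto
      qed
    qed
    then show ?thesis using that by blast
  next
    case False
    then obtain y where y: "y \<in> D" "phi y = x" "ed y \<notin> S" using ab unfolding absent_def by auto
    have "{P \<in> Bad S (ed x). length P = n} \<subseteq> X {0} x \<union> X {..<n} (alpha x)"
    proof
      fix P assume PB: "P \<in> {P \<in> Bad S (ed x). length P = n}"
      then have fpP: "fp P" and PS: "set (map ed P) \<subseteq> S" and ln: "length P = n" unfolding Bad_def by auto
      obtain p where p: "p < n" "P!p = x \<or> P!p = alpha x" using mem PB by auto
      show "P \<in> X {0} x \<union> X {..<n} (alpha x)"
      proof (cases "P!p = x")
        case True
        have "p = 0"
        proof (rule ccontr)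
          assume "p \<noteq> 0"
          then obtain q where q: "p = Suc q" by (cases p) auto
          then have "P!p = phi (P!q)" using fp_succ[OF fpP, of q] p ln by simp
          then have "phi (P!q) = phi y" using True y by simp
          then have "P!q = y" using injphi by (simp add: inj_eq)
          moreover have "ed (P!q) \<in> S" using PS q p ln by auto
          ultimately show False using y by simp
        qed
        then show ?thesis using True p fpP ln unfolding X_def by auto
      next
        case False
        then show ?thesis using p fpP ln unfolding X_def by auto
      qed
    qed
    then show ?thesis using that by blast
  qed
  then have "card {P \<in> Bad S (ed x). length P = n} \<le> card (X {k} x \<union> X {..<n} (alpha x))"
    using finX by (intro card_mono) auto
  also have "\<dots> \<le> card (X {k} x) + card (X {..<n} (alpha x))" by (rule card_Un_le)
  also have "\<dots> \<le> n + 1" using cX[of "{k}" x] cX[of "{..<n}" "alpha x"] by simp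
  finally show "card {P \<in> Bad S (ed x). length P = n} \<le> n + 1" .
qed

lemma sum_j: "(\<Sum>j\<in>{1..N}. real j * (1/3)^(j-1)) = 9/4 - (6*N+9)/4 * (1/3::real)^N"
proof (induction N)
  case 0 then show ?case by simp
next
  case (Suc N)
  have "(\<Sum>j\<in>{1..Suc N}. real j * (1/3)^(j-1)) = (\<Sum>j\<in>{1..N}. real j * (1/3)^(j-1)) + real (Suc N) * (1/3)^N"
    by simp
  also have "\<dots> = 9/4 - (6*real (Suc N)+9)/4 * (1/3::real)^(Suc N)"
  proof -
    define t where "t = (1/3::real)^N"
    have t3: "(1/3::real)^(Suc N) = t / 3" unfolding t_def by simp
    show ?thesis unfolding Suc.IH t3 t_def[symmetric] by (simp add: field_simps)
  qed
  finally show ?case by simp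
qed

lemma sum_g: "(\<Sum>j\<in>{1..N}. (1/3::real)^(j-1)) = 3/2 * (1 - (1/3::real)^N)"
proof (induction N)
  case 0 then show ?case by simp
next
  case (Suc N)
  have "(\<Sum>j\<in>{1..Suc N}. (1/3::real)^(j-1)) = (\<Sum>j\<in>{1..N}. (1/3::real)^(j-1)) + (1/3)^N"
    by simp
  also have "\<dots> = 3/2 * (1 - (1/3::real)^(Suc N))"
  proof -
    define t where "t = (1/3::real)^N"
    have t3: "(1/3::real)^(Suc N) = t / 3" unfolding t_def by simp
    show ?thesis unfolding Suc.IH t3 t_def[symmetric] by (simp add: field_simps)
  qed
  finally show ?case by simp
qed

lemma wsum:
  assumes xD: "x \<in> D"
  shows "(\<Sum>P\<in>Bad S (ed x). (1/3::real)^(length P div 2 - 1)) \<le> 9"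
    and "absent S x \<Longrightarrow> (\<Sum>P\<in>Bad S (ed x). (1/3::real)^(length P div 2 - 1)) \<le> 6"
proof -
  define N where "N = card D"
  define B where "B = Bad S (ed x)"
  define cnt where "cnt j = card {P \<in> B. length P div 2 = j}" for j
  have img: "(\<lambda>P. length P div 2) ` B \<subseteq> {1..N}"
  proof
    fix k assume "k \<in> (\<lambda>P. length P div 2) ` B"
    then obtain P where P: "P \<in> B" "k = length P div 2" by auto
    then have "fp P" "even (length P)" unfolding B_def Bad_def by auto
    moreover then have "P \<noteq> []" unfolding facial_path_def by simp
    ultimately have "length P = 2 * k" "0 < length P" "length P \<le> N" using fp_len[of P] P N_def by auto
    then show "k \<in> {1..N}" by auto
  qed
  have eqcnt: "{P \<in> B. length P div 2 = j} = {P \<in> Bad S (ed x). length P = 2*j}" for j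
    unfolding B_def Bad_def by (auto elim!: evenE)
  have finB: "finite B" using finBad B_def by simp
  have grp: "(\<Sum>P\<in>B. (1/3::real)^(length P div 2 - 1)) = (\<Sum>j\<in>{1..N}. real (cnt j) * (1/3)^(j-1))"
  proof -
    have "(\<Sum>j\<in>{1..N}. \<Sum>P\<in>{P \<in> B. length P div 2 = j}. (1/3::real)^(length P div 2 - 1)) =
          (\<Sum>P\<in>B. (1/3::real)^(length P div 2 - 1))"
      by (rule sum.group[OF finB finite_atLeastAtMost img])
    moreover have "(\<Sum>P\<in>{P \<in> B. length P div 2 = j}. (1/3::real)^(length P div 2 - 1)) = real (cnt j) * (1/3)^(j-1)" for j
    proof -
      have "(\<Sum>P\<in>{P \<in> B. length P div 2 = j}. (1/3::real)^(length P div 2 - 1)) =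
            (\<Sum>P\<in>{P \<in> B. length P div 2 = j}. (1/3::real)^(j - 1))"
        by (rule sum.cong) auto
      also have "\<dots> = real (cnt j) * (1/3)^(j-1)" unfolding cnt_def by simp
      finally show ?thesis .
    qed
    ultimately show ?thesis by simp
  qed
  have "(\<Sum>j\<in>{1..N}. real (cnt j) * (1/3::real)^(j-1)) \<le> (\<Sum>j\<in>{1..N}. 4 * (real j * (1/3)^(j-1)))"
  proof (intro sum_mono)
    fix j have "cnt j \<le> 4 * j" using card_Bad_len(1)[OF xD, of S "2*j"] eqcnt cnt_def by simp
    then have "real (cnt j) \<le> 4 * real j" by linarith
    then have "real (cnt j) * (1/3::real)^(j-1) \<le> (4 * real j) * (1/3)^(j-1)"
      by (rule mult_right_mono) simp
    then show "real (cnt j) * (1/3::real)^(j-1) \<le> 4 * (real j * (1/3)^(j-1))"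
      by (simp add: algebra_simps)
  qed
  also have "\<dots> = 4 * (\<Sum>j\<in>{1..N}. real j * (1/3::real)^(j-1))"
    by (simp add: sum_distrib_left)
  also have "\<dots> \<le> 9"
  proof -
    have t2: "0 \<le> (6 * real N + 9) / 4 * (1/3::real)^N" by simp
    show ?thesis unfolding sum_j using t2 by simp
  qed
  finally show "(\<Sum>P\<in>Bad S (ed x). (1/3::real)^(length P div 2 - 1)) \<le> 9" using grp B_def by simp
  assume ab: "absent S x"
  have "(\<Sum>j\<in>{1..N}. real (cnt j) * (1/3::real)^(j-1)) \<le> (\<Sum>j\<in>{1..N}. 2 * (real j * (1/3)^(j-1)) + (1/3)^(j-1))"
  proof (intro sum_mono)
    fix j have "cnt j \<le> 2 * j + 1" using card_Bad_len(2)[OF xD ab, of "2*j"] eqcnt cnt_def by simp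
    then have "real (cnt j) \<le> 2 * real j + 1" by linarith
    then have "real (cnt j) * (1/3::real)^(j-1) \<le> (2 * real j + 1) * (1/3)^(j-1)"
      by (rule mult_right_mono) simp
    then show "real (cnt j) * (1/3::real)^(j-1) \<le> 2 * (real j * (1/3)^(j-1)) + (1/3)^(j-1)"
      by (simp add: algebra_simps)
  qed
  also have "\<dots> = 2 * (\<Sum>j\<in>{1..N}. real j * (1/3::real)^(j-1)) + (\<Sum>j\<in>{1..N}. (1/3::real)^(j-1))"
    by (simp add: sum.distrib sum_distrib_left)
  also have "\<dots> \<le> 6"
  proof -
    have t0: "0 \<le> (1/3::real)^N" by simp
    have t2: "0 \<le> (6 * real N + 9) / 4 * (1/3::real)^N" by simp
    have aux: "2 * (9/4 - (6 * real N + 9) / 4 * t) + 3/2 * (1 - t) \<le> 6"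
      if h1: "0 \<le> t" and h2: "0 \<le> (6 * real N + 9) / 4 * t" for t :: real
    proof -
      have eq: "2 * (9/4 - (6 * real N + 9) / 4 * t) + 3/2 * (1 - t) = 6 - (3 * real N + 6) * t"
        by (simp add: field_simps)
      have "0 \<le> (3 * real N + 6) * t" using h1 by simp
      then show ?thesis unfolding eq by linarith
    qed
    show ?thesis unfolding sum_j sum_g using aux[OF t0 t2] by simp
  qed
  finally show "(\<Sum>P\<in>Bad S (ed x). (1/3::real)^(length P div 2 - 1)) \<le> 6" using grp B_def by simp
qed


lemma set_take_nth: "j \<le> length xs \<Longrightarrow> set (take j xs) = (!) xs ` {..<j}"
proof
  assume j: "j \<le> length xs"
  show "set (take j xs) \<subseteq> (!) xs ` {..<j}"
  proof
    fix z assume "z \<in> set (take j xs)"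
    then obtain i where "i < length (take j xs)" "z = take j xs ! i" by (auto simp: in_set_conv_nth)
    then show "z \<in> (!) xs ` {..<j}" using j by auto
  qed
  show "(!) xs ` {..<j} \<subseteq> set (take j xs)"
  proof
    fix z assume "z \<in> (!) xs ` {..<j}"
    then obtain i where i: "i < j" "z = xs ! i" by auto
    then have "take j xs ! i = z" "i < length (take j xs)" using j by auto
    then show "z \<in> set (take j xs)" by (metis nth_mem)
  qed
qed

lemma set_drop_nth: "set (drop j xs) = (!) xs ` {j..<length xs}"
proof
  show "set (drop j xs) \<subseteq> (!) xs ` {j..<length xs}"
  proof
    fix z assume "z \<in> set (drop j xs)"
    then obtain i where "i < length (drop j xs)" "z = drop j xs ! i" by (auto simp: in_set_conv_nth)
    then show "z \<in> (!) xs ` {j..<length xs}" by (auto intro!: image_eqI[of _ _ "j+i"])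
  qed
  show "(!) xs ` {j..<length xs} \<subseteq> set (drop j xs)"
  proof
    fix z assume "z \<in> (!) xs ` {j..<length xs}"
    then obtain i where i: "j \<le> i" "i < length xs" "z = xs ! i" by auto
    then have "drop j xs ! (i - j) = z" "i - j < length (drop j xs)" by auto
    then show "z \<in> set (drop j xs)" by (metis nth_mem)
  qed
qed

lemma Hform: assumes PB: "P \<in> Bad S e"
  shows "\<exists>a b p. a \<le> p \<and> p \<le> b \<and> b < length P \<and> b - a = length P div 2 - 1 \<and> ed (P!p) = e
     \<and> H e P = ed ` (nth P ` {a..b})"
proof -
  define j where "j = length P div 2"
  have fpP: "fp P" and ev: "even (length P)" and eP: "e \<in> ed ` set P" using PB unfolding Bad_def by auto
  have "P \<noteq> []" using fpP unfolding facial_path_def by simp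
  moreover have l2: "length P = 2*j" using ev j_def by auto
  ultimately have "j \<noteq> 0" by (metis length_0_conv mult_0_right)
  then have lj: "length P = 2*j" "j \<ge> 1" using l2 by auto
  have tk: "set (take j P) = (!) P ` {0..j-1}"
  proof -
    have e1: "{..<j} = {0..j-1}" using lj by auto
    have "j \<le> length P" using lj by simp
    then show ?thesis unfolding e1[symmetric] by (rule set_take_nth)
  qed
  have dr: "set (drop j P) = (!) P ` {j..2*j-1}"
  proof -
    have e1: "{j..<length P} = {j..2*j-1}" using lj by auto
    show ?thesis unfolding e1[symmetric] by (rule set_drop_nth)
  qed
  show ?thesis
  proof (cases "e \<in> ed ` set (take j P)")
    case True
    then have Hd: "H e P = ed ` (nth P ` {0..j-1})" unfolding H_def j_def[symmetric] Let_def
      by (simp only: True if_True tk)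
    from True obtain p where p: "p \<in> {0..j-1}" "ed (P!p) = e" unfolding tk by blast
    have c: "0 \<le> p" "p \<le> j-1" "j - 1 < length P" "j - 1 - 0 = length P div 2 - 1" using p(1) lj by auto
    show ?thesis by (intro exI[of _ 0] exI[of _ "j-1"] exI[of _ p] conjI c p(2) Hd)
  next
    case False
    then have Hd: "H e P = ed ` (nth P ` {j..2*j-1})" unfolding H_def j_def[symmetric] Let_def
      by (simp only: False if_False dr)
    have "set P = set (take j P) \<union> set (drop j P)" by (metis append_take_drop_id set_append)
    then have "e \<in> ed ` set (drop j P)" using eP False by auto
    then obtain p where p: "p \<in> {j..2*j-1}" "ed (P!p) = e" unfolding dr by blast
    have c: "j \<le> p" "p \<le> 2*j-1" "2*j - 1 < length P" "2*j - 1 - j = length P div 2 - 1" using p(1) lj by auto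
    show ?thesis by (intro exI[of _ j] exI[of _ "2*j-1"] exI[of _ p] conjI c p(2) Hd)
  qed
qed

lemma step:
  assumes SE: "S \<subseteq> E" and xD: "x \<in> D" and xS: "ed x \<in> S"
  and Bh: "\<And>T y. T \<subseteq> S - {ed x} \<Longrightarrow> y \<in> D \<Longrightarrow> ed y \<in> T \<Longrightarrow> absent T y \<Longrightarrow> 3 * G (T - {ed y}) \<le> G T"
  shows "10 * real (G (S - {ed x})) \<le> real (G S) + real (G (S - {ed x})) * (\<Sum>P\<in>Bad S (ed x). (1/3::real)^(length P div 2 - 1))"
proof -
  have per: "real (G (S - H (ed x) P)) \<le> real (G (S - {ed x})) * (1/3)^(length P div 2 - 1)"
    if PB: "P \<in> Bad S (ed x)" for P
  proof -
    obtain a b p where abp: "a \<le> p" "p \<le> b" "b < length P" "b - a = length P div 2 - 1"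
      "ed (P!p) = ed x" "H (ed x) P = ed ` (nth P ` {a..b})" using Hform[OF PB] by metis
    have fpP: "fp P" and PS: "set (map ed P) \<subseteq> S" using PB unfolding Bad_def by auto
    have Bh': "3 * G (T - {ed y}) \<le> G T"
      if "T \<subseteq> S - {ed (P!p)}" "y \<in> D" "ed y \<in> T" "absent T y" for T y
      using Bh[of T y] that abp(5) by simp
    have ch: "3^(b-a) * G (S - ed ` (nth P ` {a..b})) \<le> G (S - {ed (P!p)})"
      by (rule chain[OF Bh' fpP PS abp(3) abp(1) abp(2)])
    define k where "k = length P div 2 - 1"
    define G1 where "G1 = G (S - H (ed x) P)"
    define G2 where "G2 = G (S - {ed x})"
    have "3^k * G1 \<le> G2" using ch abp(4) abp(5) abp(6) unfolding k_def G1_def G2_def by simp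
    then have "real (3^k * G1) \<le> real G2" by (rule of_nat_mono)
    then have h: "real G1 * 3^k \<le> real G2" by (simp add: mult.commute)
    have "real G1 \<le> real G2 / 3^k" using h by (simp add: pos_le_divide_eq)
    also have "\<dots> = real G2 * (1/3)^k" by (simp add: power_one_over)
    finally show ?thesis unfolding G1_def G2_def k_def .
  qed
  have "10 * G (S - {ed x}) \<le> G S + (\<Sum>P\<in>Bad S (ed x). G (S - H (ed x) P))"
    using count[OF SE xD xS] .
  then have "real (10 * G (S - {ed x})) \<le> real (G S + (\<Sum>P\<in>Bad S (ed x). G (S - H (ed x) P)))"
    by (rule of_nat_mono)
  then have "10 * real (G (S - {ed x})) \<le> real (G S) + (\<Sum>P\<in>Bad S (ed x). real (G (S - H (ed x) P)))"
    by (simp only: of_nat_mult of_nat_add of_nat_sum of_nat_numeral)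
  also have "\<dots> \<le> real (G S) + (\<Sum>P\<in>Bad S (ed x). real (G (S - {ed x})) * (1/3)^(length P div 2 - 1))"
    by (intro add_left_mono sum_mono per)
  also have "\<dots> = real (G S) + real (G (S - {ed x})) * (\<Sum>P\<in>Bad S (ed x). (1/3::real)^(length P div 2 - 1))"
    by (simp add: sum_distrib_left)
  finally show ?thesis .
qed

lemma lemB: "S \<subseteq> E \<Longrightarrow> x \<in> D \<Longrightarrow> ed x \<in> S \<Longrightarrow> absent S x \<Longrightarrow> 3 * G (S - {ed x}) \<le> G S"
proof (induction "card S" arbitrary: S x rule: less_induct)
  case less
  have finS: "finite S" using less.prems(1) finE finite_subset by blast
  have Bh: "3 * G (T - {ed y}) \<le> G T"
    if "T \<subseteq> S - {ed x}" "y \<in> D" "ed y \<in> T" "absent T y" for T y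
  proof -
    have "T \<subset> S" using that(1) less.prems(3) by auto
    then have "card T < card S" using finS by (simp add: psubset_card_mono)
    moreover have "T \<subseteq> E" using that(1) less.prems(1) by auto
    ultimately show ?thesis using less.hyps that(2-4) by blast
  qed
  have st: "10 * real (G (S - {ed x})) \<le> real (G S) + real (G (S - {ed x})) * (\<Sum>P\<in>Bad S (ed x). (1/3::real)^(length P div 2 - 1))"
    using step[OF less.prems(1-3)] Bh by blast
  have "(\<Sum>P\<in>Bad S (ed x). (1/3::real)^(length P div 2 - 1)) \<le> 6" using wsum(2)[OF less.prems(2) less.prems(4)] .
  then have "real (G (S - {ed x})) * (\<Sum>P\<in>Bad S (ed x). (1/3::real)^(length P div 2 - 1)) \<le> real (G (S - {ed x})) * 6"
    by (intro mult_left_mono) auto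
  then have "3 * real (G (S - {ed x})) \<le> real (G S)" using st by linarith
  then show ?case by linarith
qed

lemma lemA: "S \<subseteq> E \<Longrightarrow> x \<in> D \<Longrightarrow> ed x \<in> S \<Longrightarrow> G (S - {ed x}) \<le> G S"
proof -
  assume a: "S \<subseteq> E" "x \<in> D" "ed x \<in> S"
  have st: "10 * real (G (S - {ed x})) \<le> real (G S) + real (G (S - {ed x})) * (\<Sum>P\<in>Bad S (ed x). (1/3::real)^(length P div 2 - 1))"
    using step[OF a] lemB a by (meson Diff_subset order_trans)
  have "(\<Sum>P\<in>Bad S (ed x). (1/3::real)^(length P div 2 - 1)) \<le> 9" using wsum(1)[OF a(2)] .
  then have "real (G (S - {ed x})) * (\<Sum>P\<in>Bad S (ed x). (1/3::real)^(length P div 2 - 1)) \<le> real (G (S - {ed x})) * 9"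
    by (intro mult_left_mono) auto
  then have "real (G (S - {ed x})) \<le> real (G S)" using st by linarith
  then show ?thesis by linarith
qed

lemma G_empty: "G {} = 1"
proof -
  have "GS {} = {\<lambda>_. undefined}"
    unfolding GS_def good_def facial_path_def by auto
  then show ?thesis unfolding G_def by simp
qed

lemma Gpos: "S \<subseteq> E \<Longrightarrow> G S \<ge> 1"
proof -
  assume SE: "S \<subseteq> E"
  have "finite S" using SE finE finite_subset by blast
  then show ?thesis using SE
  proof (induction S rule: finite_induct)
    case empty then show ?case using G_empty by simp
  next
    case (insert e F)
    obtain x where x: "x \<in> D" "e = ed x" using insert.prems unfolding E_def by auto
    have "G (insert e F - {ed x}) \<le> G (insert e F)" using lemA[of "insert e F" x] insert.prems x by auto
    moreover have "insert e F - {ed x} = F" using insert.hyps(2) x by auto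
    ultimately show ?case using insert.IH insert.prems by auto
  qed
qed

lemma exists_good: "\<exists>f. f \<in> PiE E L \<and> good E f"
proof -
  have "GS E \<noteq> {}" using Gpos[of E] unfolding G_def by auto
  then show ?thesis unfolding GS_def by auto
qed

end
theorem corollary2:
  fixes D :: "'d set" and alpha sigma :: "'d \<Rightarrow> 'd" and L :: "'d set \<Rightarrow> 'c set"
  assumes "plane_graph D alpha sigma"
    and "\<forall>d\<in>D. infinite (L (edge_of alpha d)) \<or> 10 \<le> card (L (edge_of alpha d))"
  shows "\<exists>c :: 'd set \<Rightarrow> 'c.
           (\<forall>d\<in>D. c (edge_of alpha d) \<in> L (edge_of alpha d)) \<and>
           facially_nonrepetitive D alpha sigma c"
proof -
  have pm: "finite D" "alpha permutes D" "sigma permutes D" "\<forall>d\<in>D. alpha d \<noteq> d \<and> alpha (alpha d) = d"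
    using assms(1) unfolding plane_graph_def plane_map_def by auto
  define L' where "L' e = (SOME B. B \<subseteq> L e \<and> finite B \<and> card B = 10)" for e
  have L'p: "L' (edge_of alpha d) \<subseteq> L (edge_of alpha d) \<and> finite (L' (edge_of alpha d)) \<and> card (L' (edge_of alpha d)) = 10"
    if d: "d \<in> D" for d
  proof -
    have "\<exists>B. B \<subseteq> L (edge_of alpha d) \<and> finite B \<and> card B = 10"
    proof (cases "finite (L (edge_of alpha d))")
      case False
      then show ?thesis using infinite_arbitrarily_large by blast
    next
      case True
      then have "10 \<le> card (L (edge_of alpha d))" using assms(2) d by auto
      then obtain B where "B \<subseteq> L (edge_of alpha d)" "card B = 10" "finite B"
        by (rule obtain_subset_with_card_n)
      then show ?thesis by blast
    qed
    then show ?thesis unfolding L'_def by (rule someI_ex)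
  qed
  interpret fnr D alpha sigma L'
    using pm L'p by unfold_locales auto
  obtain f where f: "f \<in> PiE E L'" "good E f" using exists_good by blast
  show ?thesis
  proof (intro exI conjI)
    show "\<forall>d\<in>D. f (edge_of alpha d) \<in> L (edge_of alpha d)"
    proof
      fix d assume d: "d \<in> D"
      then have "edge_of alpha d \<in> E" unfolding E_def by simp
      then have "f (edge_of alpha d) \<in> L' (edge_of alpha d)" using f(1) by (auto simp: PiE_iff)
      then show "f (edge_of alpha d) \<in> L (edge_of alpha d)" using L'p[OF d] by auto
    qed
    show "facially_nonrepetitive D alpha sigma f"
      unfolding facially_nonrepetitive_def
    proof (intro allI impI)
      fix ds assume ds: "facial_path D alpha sigma ds"
      then have "set (map (edge_of alpha) ds) \<subseteq> E" unfolding E_def facial_path_def by auto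
      then show "\<not> repetition (map (\<lambda>d. f (edge_of alpha d)) ds)" using f(2) ds unfolding good_def by blast
    qed
  qed
qed

end
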